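(* Let $(G,G_{\mathrm{mtree}})$ be a strictly increasing graph. Then there is a computad $(G,\mathfrak{g}_2,s,t)$ with $|\mathfrak{g}_2|=1-\chi(\mathcal{F}_{\mathrm{Top}_1}(G))$ which presents the thin category $\overline{\mathcal{M}_1}\mathcal{F}_1(G)$ freely generated by $G$.
   Context: Graphs and their categories. - A small graph $G$ consists of a set of objects, a set of arrows, and domain and codomain maps. - $\mathcal{F}_1(G)$ is the free category on $G$, whose morphisms are paths. - $\overline{\mathcal{M}_1}\mathcal{F}_1(G)$ is its thin (preorder) reflection: the preorder on objects with $x\le y$ iff there is a path $x\to y$. - $\mathcal{F}_{\mathrm{Top}_1}(G)$ is the topological realization of $G$, and $\chi$ is the real Euler characteristic. Weak trees. - $G$ is connected if $\mathcal{F}_1(G)$ is connected. - A weak tree is a connected graph $T$ such that $\mathcal{F}_1(T)$ is thin. - A maximal weak tree of $G$ is a subgraph of $G$ that is a weak tree and is maximal among such subgraphs. Monotone and strictly increasing graphs. A monotone graph is a pair $(G,G_{\mathrm{mtree}})$ satisfying: - $G$ is a small connected graph; - $\chi(\mathcal{F}_{\mathrm{Top}_1}(G))\in\mathbb{Z}$; - $G_{\mathrm{mtree}}$ is a maximal weak tree of $G$; - for every arrow $f\colon x\to y$ of $G$, either $x\le y$ or $y\le x$, where $\le$ is the partial order of the poset $\mathcal{F}_1(G_{\mathrm{mtree}})$. An arrow $f\colon x\to y$ with $y\le x$ is called nonincreasing. A monotone graph with no nonincreasing arrows is called strictly increasing. Computads. A computad $(G,\mathfrak{g}_2,s,t)$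 is a set $\mathfrak{g}_2$ together with, for each $\alpha\in\mathfrak{g}_2$, parallel morphisms $s(\alpha),t(\alpha)$ of $\mathcal{F}_1(G)$. It presents the category obtained as the quotient of $\mathcal{F}_1(G)$ by the smallest congruence identifying $s(\alpha)$ and $t(\alpha)$. *)

theory Defs
  imports Main
begin

record ('v, 'a) graph =
  Obj  :: "'v set"
  Arr  :: "'a set"
  gdom :: "'a \<Rightarrow> 'v"
  gcod :: "'a \<Rightarrow> 'v"

definition wf_graph :: "('v, 'a) graph \<Rightarrow> bool" where
  "wf_graph G \<longleftrightarrow> (\<forall>f \<in> Arr G. gdom G f \<in> Obj G \<and> gcod G f \<in> Obj G)"

definition subgraph :: "('v, 'a) graph \<Rightarrow> ('v, 'a) graph \<Rightarrow> bool" where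
  "subgraph H G \<longleftrightarrow> wf_graph H \<and> Obj H \<subseteq> Obj G \<and> Arr H \<subseteq> Arr G \<and>
     (\<forall>f \<in> Arr H. gdom H f = gdom G f \<and> gcod H f = gcod G f)"

section \<open>The free category F_1(G): morphisms are paths (x, [f1,...,fn], y)\<close>

inductive gpath :: "('v, 'a) graph \<Rightarrow> 'v \<Rightarrow> 'a list \<Rightarrow> 'v \<Rightarrow> bool" for G where
  gpath_nil: "x \<in> Obj G \<Longrightarrow> gpath G x [] x"
| gpath_cons: "f \<in> Arr G \<Longrightarrow> gdom G f = x \<Longrightarrow> gpath G (gcod G f) fs y \<Longrightarrow> gpath G x (f # fs) y"

type_synonym ('v, 'a) mor = "'v \<times> 'a list \<times> 'v"

definition is_mor :: "('v, 'a) graph \<Rightarrow> ('v, 'a) mor \<Rightarrow> bool" where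
  "is_mor G m \<longleftrightarrow> (case m of (x, p, y) \<Rightarrow> gpath G x p y)"

definition parallel :: "('v, 'a) graph \<Rightarrow> ('v, 'a) mor \<Rightarrow> ('v, 'a) mor \<Rightarrow> bool" where
  "parallel G m n \<longleftrightarrow> is_mor G m \<and> is_mor G n \<and> fst m = fst n \<and> snd (snd m) = snd (snd n)"

text \<open>Thin reflection / preorder: x \<le> y iff there is a path x \<rightarrow> y.\<close>
definition reach :: "('v, 'a) graph \<Rightarrow> 'v \<Rightarrow> 'v \<Rightarrow> bool" where
  "reach G x y \<longleftrightarrow> (\<exists>p. gpath G x p y)"

definition connected_graph :: "('v, 'a) graph \<Rightarrow> bool" where
  "connected_graph G \<longleftrightarrow> Obj G \<noteq> {} \<and>
     (\<forall>x \<in> Obj G. \<forall>y \<in> Obj G. (\<lambda>a b. reach G a b \<or> reach G b a)\<^sup>*\<^sup>* x y)"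

definition thin_free :: "('v, 'a) graph \<Rightarrow> bool" where
  "thin_free G \<longleftrightarrow> (\<forall>x y p q. gpath G x p y \<longrightarrow> gpath G x q y \<longrightarrow> p = q)"

definition weak_tree :: "('v, 'a) graph \<Rightarrow> bool" where
  "weak_tree T \<longleftrightarrow> wf_graph T \<and> connected_graph T \<and> thin_free T"

definition maximal_weak_tree :: "('v, 'a) graph \<Rightarrow> ('v, 'a) graph \<Rightarrow> bool" where
  "maximal_weak_tree T G \<longleftrightarrow> subgraph T G \<and> weak_tree T \<and>
     (\<forall>T'. subgraph T' G \<and> weak_tree T' \<and> subgraph T T' \<longrightarrow> Obj T' = Obj T \<and> Arr T' = Arr T)"

text \<open>Combinatorial rendering: the realization of a graph is a 1-dimensional CW complex;
  for a connected graph it is homotopy equivalent to a wedge of circles indexed by the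
  arrows outside an (undirected) spanning tree.\<close>

definition uconn :: "('v, 'a) graph \<Rightarrow> 'a set \<Rightarrow> 'v \<Rightarrow> 'v \<Rightarrow> bool" where
  "uconn G T = (\<lambda>a b. \<exists>e \<in> T. (gdom G e = a \<and> gcod G e = b) \<or> (gdom G e = b \<and> gcod G e = a))\<^sup>*\<^sup>*"

definition spanning_tree :: "('v, 'a) graph \<Rightarrow> 'a set \<Rightarrow> bool" where
  "spanning_tree G T \<longleftrightarrow> T \<subseteq> Arr G \<and>
     (\<forall>x \<in> Obj G. \<forall>y \<in> Obj G. uconn G T x y) \<and>
     (\<forall>e \<in> T. \<not> uconn G (T - {e}) (gdom G e) (gcod G e))"

definition euler_char_is_int :: "('v, 'a) graph \<Rightarrow> bool" where
  "euler_char_is_int G \<longleftrightarrow> (\<exists>T. spanning_tree G T \<and> finite (Arr G - T))"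

definition euler_char :: "('v, 'a) graph \<Rightarrow> int" where
  "euler_char G = (THE \<chi>. \<exists>T. spanning_tree G T \<and> finite (Arr G - T) \<and> \<chi> = 1 - int (card (Arr G - T)))"

definition monotone_graph :: "('v, 'a) graph \<Rightarrow> ('v, 'a) graph \<Rightarrow> bool" where
  "monotone_graph G T \<longleftrightarrow> wf_graph G \<and> connected_graph G \<and> euler_char_is_int G \<and>
     maximal_weak_tree T G \<and>
     (\<forall>f \<in> Arr G. reach T (gdom G f) (gcod G f) \<or> reach T (gcod G f) (gdom G f))"

definition strictly_increasing_graph :: "('v, 'a) graph \<Rightarrow> ('v, 'a) graph \<Rightarrow> bool" where
  "strictly_increasing_graph G T \<longleftrightarrow> monotone_graph G T \<and>
     (\<forall>f \<in> Arr G. \<not> reach T (gcod G f) (gdom G f))"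

definition computad :: "('v, 'a) graph \<Rightarrow> 'c set \<Rightarrow> ('c \<Rightarrow> ('v, 'a) mor) \<Rightarrow> ('c \<Rightarrow> ('v, 'a) mor) \<Rightarrow> bool" where
  "computad G g2 s t \<longleftrightarrow> (\<forall>\<alpha> \<in> g2. parallel G (s \<alpha>) (t \<alpha>))"

inductive gen_cong :: "('v, 'a) graph \<Rightarrow> 'c set \<Rightarrow> ('c \<Rightarrow> ('v, 'a) mor) \<Rightarrow> ('c \<Rightarrow> ('v, 'a) mor)
    \<Rightarrow> ('v, 'a) mor \<Rightarrow> ('v, 'a) mor \<Rightarrow> bool" for G g2 s t where
  cong_gen: "\<alpha> \<in> g2 \<Longrightarrow> gen_cong G g2 s t (s \<alpha>) (t \<alpha>)"
| cong_refl: "is_mor G m \<Longrightarrow> gen_cong G g2 s t m m"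
| cong_sym: "gen_cong G g2 s t m n \<Longrightarrow> gen_cong G g2 s t n m"
| cong_trans: "gen_cong G g2 s t m n \<Longrightarrow> gen_cong G g2 s t n k \<Longrightarrow> gen_cong G g2 s t m k"
| cong_ctx: "gen_cong G g2 s t (x, p, y) (x, q, y) \<Longrightarrow> gpath G w a x \<Longrightarrow> gpath G y b z \<Longrightarrow>
     gen_cong G g2 s t (w, a @ p @ b, z) (w, a @ q @ b, z)"

text \<open>The computad presents the thin reflection of F_1(G) (via the canonical identity-on-objects
  functor F_1(G)/~ \<rightarrow> thin reflection) iff the generated congruence identifies
  all parallel morphisms of F_1(G) (it only ever relates parallel ones).\<close>
definition presents_thin_reflection ::
  "('v, 'a) graph \<Rightarrow> 'c set \<Rightarrow> ('c \<Rightarrow> ('v, 'a) mor) \<Rightarrow> ('c \<Rightarrow> ('v, 'a) mor) \<Rightarrow> bool" where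
  "presents_thin_reflection G g2 s t \<longleftrightarrow>
     (\<forall>m n. gen_cong G g2 s t m n \<longleftrightarrow> parallel G m n)"

end

theory Submission
  imports Defs
begin

definition adjr :: "('v, 'a) graph \<Rightarrow> 'a set \<Rightarrow> 'v \<Rightarrow> 'v \<Rightarrow> bool" where
  "adjr G R a b \<longleftrightarrow> (\<exists>e\<in>R. gdom G e = a \<and> gcod G e = b \<or> gdom G e = b \<and> gcod G e = a)"

lemma uconn_alt: "uconn G R = (adjr G R)\<^sup>*\<^sup>*"
  unfolding uconn_def adjr_def by simp

lemma uconn_refl: "uconn G R a a" by (simp add: uconn_alt)

lemma uconn_step: "uconn G R a b \<Longrightarrow> e \<in> R \<Longrightarrow> (gdom G e = b \<and> gcod G e = c) \<or> (gdom G e = c \<and> gcod G e = b) \<Longrightarrow> uconn G R a c"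
  unfolding uconn_alt
  by (rule rtranclp.rtrancl_into_rtrancl[of _ a b c]) (auto simp: adjr_def)

lemma uconn_edge1: "e \<in> R \<Longrightarrow> uconn G R (gdom G e) (gcod G e)"
  by (rule uconn_step[OF uconn_refl, of e]) auto

lemma uconn_edge2: "e \<in> R \<Longrightarrow> uconn G R (gcod G e) (gdom G e)"
  by (rule uconn_step[OF uconn_refl, of e]) auto

lemma uconn_trans: "uconn G R a b \<Longrightarrow> uconn G R b c \<Longrightarrow> uconn G R a c"
  unfolding uconn_alt by (rule rtranclp_trans)

lemma uconn_sym: "uconn G R a b \<Longrightarrow> uconn G R b a"
  unfolding uconn_alt
proof (induction rule: rtranclp_induct)
  case base then show ?case by simp
next
  case (step b c)
  from step(2) have "adjr G R c b" by (auto simp: adjr_def)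
  from converse_rtranclp_into_rtranclp[OF this step(3)] show ?case .
qed

lemma uconn_mono: "uconn G R a b \<Longrightarrow> R \<subseteq> R' \<Longrightarrow> uconn G R' a b"
  unfolding uconn_alt
proof (induction rule: rtranclp_induct)
  case base then show ?case by simp
next
  case (step b c)
  from step(2,4) have "adjr G R' b c" by (auto simp: adjr_def)
  from rtranclp.rtrancl_into_rtrancl[OF step(3)[OF step(4)] this] show ?case .
qed

lemma uconn_insert:
  assumes "uconn G (insert e R) a b"
  shows "uconn G R a b \<or> (uconn G R a (gdom G e) \<and> uconn G R (gcod G e) b)
     \<or> (uconn G R a (gcod G e) \<and> uconn G R (gdom G e) b)"
proof -
  have "(adjr G (insert e R))\<^sup>*\<^sup>* a b" using assms by (simp add: uconn_alt)
  then show ?thesis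
  proof (induction rule: rtranclp_induct)
    case base then show ?case by (simp add: uconn_refl)
  next
    case (step b c)
    from step(2) obtain e' where e': "e' \<in> insert e R"
      "(gdom G e' = b \<and> gcod G e' = c) \<or> (gdom G e' = c \<and> gcod G e' = b)" by (auto simp: adjr_def)
    show ?case
    proof (cases "e' \<in> R")
      case True
      note st = uconn_step[OF _ True e'(2)]
      from step(3) show ?thesis
      proof (elim disjE conjE)
        assume "uconn G R a b" then show ?thesis using st by blast
      next
        assume "uconn G R a (gdom G e)" "uconn G R (gcod G e) b" then show ?thesis using st by blast
      next
        assume "uconn G R a (gcod G e)" "uconn G R (gdom G e) b" then show ?thesis using st by blast
      qed
    next
      case False
      then have ee: "e' = e" using e' by blast
      from step(3) show ?thesis
      proof (elim disjE conjE)
        assume "uconn G R a b" then show ?thesis using e'(2) ee by (auto simp: uconn_refl)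
      next
        assume "uconn G R a (gdom G e)" "uconn G R (gcod G e) b" then show ?thesis using e'(2) ee by (auto simp: uconn_refl)
      next
        assume "uconn G R a (gcod G e)" "uconn G R (gdom G e) b" then show ?thesis using e'(2) ee by (auto simp: uconn_refl)
      qed
    qed
  qed
qed

lemma uconn_leave:
  assumes "uconn G A a b" "P a" "\<not> P b"
  shows "\<exists>e\<in>A. (P (gdom G e) \<and> \<not> P (gcod G e)) \<or> (P (gcod G e) \<and> \<not> P (gdom G e))"
proof -
  have "(adjr G A)\<^sup>*\<^sup>* a b" using assms by (simp add: uconn_alt)
  then show ?thesis using assms(2,3)
  proof (induction rule: rtranclp_induct)
    case base then show ?case by simp
  next
    case (step b c)
    then show ?case by (cases "P b") (auto simp: adjr_def)
  qed
qed

lemma exchange: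
  assumes wf: "wf_graph G" and S: "spanning_tree G S" and d: "d \<in> S"
    and A: "A \<subseteq> Arr G" "\<forall>x\<in>Obj G. \<forall>y\<in>Obj G. uconn G A x y" "d \<notin> A"
  shows "\<exists>c \<in> A - S. spanning_tree G (insert c (S - {d}))"
proof -
  define x where "x = gdom G d"
  define y where "y = gcod G d"
  define S' where "S' = S - {d}"
  have dG: "d \<in> Arr G" using S d by (auto simp: spanning_tree_def)
  have xy: "x \<in> Obj G" "y \<in> Obj G" using wf dG by (auto simp: wf_graph_def x_def y_def)
  have nb: "\<not> uconn G S' x y" using S d by (auto simp: spanning_tree_def S'_def x_def y_def)
  have split: "uconn G S' x v \<or> uconn G S' y v" if "v \<in> Obj G" for v
  proof -
    have "uconn G S x v" using S that xy by (auto simp: spanning_tree_def)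
    hence "uconn G (insert d S') x v" using d S'_def insert_Diff by metis
    from uconn_insert[OF this] show ?thesis unfolding x_def[symmetric] y_def[symmetric]
      using uconn_refl uconn_trans uconn_sym by metis
  qed
  obtain c where c: "c \<in> A" and cross: "(uconn G S' x (gdom G c) \<and> \<not> uconn G S' x (gcod G c))
     \<or> (uconn G S' x (gcod G c) \<and> \<not> uconn G S' x (gdom G c))"
    using uconn_leave[of G A x y "\<lambda>v. uconn G S' x v"] A(2) xy nb uconn_refl[of G S' x] by blast
  have cG: "c \<in> Arr G" using c A by auto
  have cObj: "gdom G c \<in> Obj G" "gcod G c \<in> Obj G" using cG wf by (auto simp: wf_graph_def)
  have ncS1: "\<not> uconn G S' (gdom G c) (gcod G c)"
    using cross uconn_trans uconn_sym by metis
  have ncS2: "\<not> uconn G S' (gcod G c) (gdom G c)"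
    using ncS1 uconn_sym by metis
  have cS: "c \<notin> S"
  proof
    assume "c \<in> S"
    moreover have "c \<noteq> d" using c A(3) by auto
    ultimately have "c \<in> S'" by (auto simp: S'_def)
    then show False using ncS1 uconn_edge1 by metis
  qed
  have xyc: "uconn G (insert c S') x y"
  proof -
    have s1: "uconn G (insert c S') (gdom G c) (gcod G c)" by (rule uconn_edge1) simp
    have m: "uconn G S' a b \<Longrightarrow> uconn G (insert c S') a b" for a b
      by (erule uconn_mono) auto
    from cross show ?thesis
    proof
      assume h: "uconn G S' x (gdom G c) \<and> \<not> uconn G S' x (gcod G c)"
      then have "uconn G S' y (gcod G c)" using split cObj by blast
      then show ?thesis using h s1 m uconn_trans uconn_sym by metis
    next
      assume h: "uconn G S' x (gcod G c) \<and> \<not> uconn G S' x (gdom G c)"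
      then have "uconn G S' y (gdom G c)" using split cObj by blast
      then show ?thesis using h s1 m uconn_trans uconn_sym by metis
    qed
  qed
  have conn: "uconn G (insert c S') x v" if "v \<in> Obj G" for v
  proof -
    have m: "uconn G S' a b \<Longrightarrow> uconn G (insert c S') a b" for a b
      by (erule uconn_mono) auto
    from split[OF that] show ?thesis using m xyc uconn_trans by metis
  qed
  have bridges: "\<not> uconn G (insert c S' - {e}) (gdom G e) (gcod G e)" if e: "e \<in> insert c S'" for e
  proof (cases "e = c")
    case True
    then have "insert c S' - {e} = S'" using cS by (auto simp: S'_def)
    then show ?thesis using ncS1 True by simp
  next
    case False
    then have eS: "e \<in> S" "e \<in> S'" using e by (auto simp: S'_def)
    have eq: "insert c S' - {e} = insert c (S' - {e})" using False by auto
    show ?thesis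
    proof
      assume "uconn G (insert c S' - {e}) (gdom G e) (gcod G e)"
      then have "uconn G (insert c (S' - {e})) (gdom G e) (gcod G e)" using eq by simp
      from uconn_insert[OF this] show False
      proof (elim disjE conjE)
        assume "uconn G (S' - {e}) (gdom G e) (gcod G e)"
        then have "uconn G (S - {e}) (gdom G e) (gcod G e)"
          by (rule uconn_mono) (auto simp: S'_def)
        then show False using S eS by (auto simp: spanning_tree_def)
      next
        assume h1: "uconn G (S' - {e}) (gdom G e) (gdom G c)" and h2: "uconn G (S' - {e}) (gcod G c) (gcod G e)"
        have a1: "uconn G S' (gdom G e) (gdom G c)" using h1 by (rule uconn_mono) auto
        have a2: "uconn G S' (gcod G c) (gcod G e)" using h2 by (rule uconn_mono) auto
        have a3: "uconn G S' (gdom G e) (gcod G e)" using eS uconn_edge1 by metis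
        show False using a1 a2 a3 ncS2 uconn_trans uconn_sym by metis
      next
        assume h1: "uconn G (S' - {e}) (gdom G e) (gcod G c)" and h2: "uconn G (S' - {e}) (gdom G c) (gcod G e)"
        have a1: "uconn G S' (gdom G e) (gcod G c)" using h1 by (rule uconn_mono) auto
        have a2: "uconn G S' (gdom G c) (gcod G e)" using h2 by (rule uconn_mono) auto
        have a3: "uconn G S' (gdom G e) (gcod G e)" using eS uconn_edge1 by metis
        show False using a1 a2 a3 ncS1 uconn_trans uconn_sym by metis
      qed
    qed
  qed
  have "spanning_tree G (insert c S')"
    unfolding spanning_tree_def
  proof (intro conjI ballI)
    show "insert c S' \<subseteq> Arr G" using cG S by (auto simp: S'_def spanning_tree_def)
  next
    fix a b assume "a \<in> Obj G" "b \<in> Obj G"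
    then show "uconn G (insert c S') a b" using conn uconn_trans uconn_sym by metis
  next
    fix e assume "e \<in> insert c S'"
    then show "\<not> uconn G (insert c S' - {e}) (gdom G e) (gcod G e)" by (rule bridges)
  qed
  then show ?thesis using c cS by (auto simp: S'_def)
qed

lemma count_le:
  assumes wf: "wf_graph G" and D: "finite D" "D \<subseteq> Arr G"
    and conn: "\<forall>x\<in>Obj G. \<forall>y\<in>Obj G. uconn G (Arr G - D) x y"
  shows "spanning_tree G S \<Longrightarrow> finite (Arr G - S) \<Longrightarrow> card D \<le> card (Arr G - S)"
proof (induction "card (D \<inter> S)" arbitrary: S rule: less_induct)
  case less
  show ?case
  proof (cases "D \<inter> S = {}")
    case True
    then have "D \<subseteq> Arr G - S" using D by auto
    then show ?thesis by (rule card_mono[OF less.prems(2)])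
  next
    case False
    then obtain d where d: "d \<in> D" "d \<in> S" by blast
    have "\<exists>c \<in> (Arr G - D) - S. spanning_tree G (insert c (S - {d}))"
      by (rule exchange[OF wf less.prems(1) d(2) _ conn]) (use d(1) in auto)
    then obtain c where c: "c \<in> (Arr G - D) - S" and S2: "spanning_tree G (insert c (S - {d}))"
      by blast
    have dG: "d \<in> Arr G" using d D by auto
    have eq: "Arr G - insert c (S - {d}) = insert d ((Arr G - S) - {c})" using c dG d by auto
    have fin: "finite (Arr G - insert c (S - {d}))" using eq less.prems(2) by simp
    have ceq: "card (Arr G - insert c (S - {d})) = card (Arr G - S)"
    proof -
      have "d \<notin> (Arr G - S) - {c}" using d by auto
      then have "card (insert d ((Arr G - S) - {c})) = Suc (card ((Arr G - S) - {c}))"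
        using less.prems(2) by simp
      also have "\<dots> = card (Arr G - S)" by (rule card_Suc_Diff1[OF less.prems(2)]) (use c in auto)
      finally show ?thesis using eq by simp
    qed
    have "D \<inter> insert c (S - {d}) = D \<inter> S - {d}" using c by auto
    moreover have "card (D \<inter> S - {d}) < card (D \<inter> S)"
      using card_Diff1_less[of "D \<inter> S" d] D(1) d by simp
    ultimately have lt: "card (D \<inter> insert c (S - {d})) < card (D \<inter> S)" by simp
    show ?thesis using less.hyps[OF lt S2 fin] ceq by simp
  qed
qed

lemma euler_unique:
  assumes wf: "wf_graph G" and S: "spanning_tree G S" "finite (Arr G - S)"
  shows "euler_char G = 1 - int (card (Arr G - S))"
proof -
  have eqc: "card (Arr G - S2) = card (Arr G - S)" if S2: "spanning_tree G S2" "finite (Arr G - S2)" for S2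
  proof -
    have sub: "X \<subseteq> Arr G \<Longrightarrow> Arr G - (Arr G - X) = X" for X by auto
    have c1: "\<forall>x\<in>Obj G. \<forall>y\<in>Obj G. uconn G (Arr G - (Arr G - S2)) x y"
      using S2 sub[of S2] by (auto simp: spanning_tree_def)
    have c2: "\<forall>x\<in>Obj G. \<forall>y\<in>Obj G. uconn G (Arr G - (Arr G - S)) x y"
      using S sub[of S] by (auto simp: spanning_tree_def)
    have l1: "card (Arr G - S2) \<le> card (Arr G - S)" by (rule count_le[OF wf S2(2) _ c1 S]) blast
    have l2: "card (Arr G - S) \<le> card (Arr G - S2)" by (rule count_le[OF wf S(2) _ c2 S2]) blast
    show ?thesis using l1 l2 by simp
  qed
  show ?thesis unfolding euler_char_def
    apply (rule the_equality)
    using S apply blast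
    using eqc by auto
qed


lemma gpath_ends: "gpath G x p y \<Longrightarrow> wf_graph G \<Longrightarrow> x \<in> Obj G \<and> y \<in> Obj G"
  by (induction rule: gpath.induct) (auto simp: wf_graph_def)

lemma gpath_append: "gpath G x p y \<Longrightarrow> gpath G y q z \<Longrightarrow> gpath G x (p @ q) z"
  by (induction rule: gpath.induct) (auto intro: gpath.intros)

lemma gpath_sub: "gpath T x p y \<Longrightarrow> subgraph T G \<Longrightarrow> gpath G x p y"
proof (induction rule: gpath.induct)
  case (gpath_nil x)
  then show ?case by (auto simp: subgraph_def intro: gpath.gpath_nil)
next
  case (gpath_cons f x fs y)
  have "f \<in> Arr G" "gdom G f = x" "gcod G f = gcod T f"
    using gpath_cons.prems gpath_cons.hyps by (auto simp: subgraph_def)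
  then show ?case using gpath.gpath_cons[of f G x fs y] gpath_cons.IH gpath_cons.prems by simp
qed

theorem mainTheorem14:
  fixes G T :: "('v, 'a) graph"
  assumes "strictly_increasing_graph G T"
  shows "\<exists>(g2 :: nat set) s t. computad G g2 s t \<and> finite g2 \<and>
           int (card g2) = 1 - euler_char G \<and> presents_thin_reflection G g2 s t"
proof -
  from assms have mono: "monotone_graph G T"
    and strict: "\<forall>f\<in>Arr G. \<not> reach T (gcod G f) (gdom G f)"
    by (auto simp: strictly_increasing_graph_def)
  from mono have wfG: "wf_graph G" and connG: "connected_graph G" and eci: "euler_char_is_int G"
    and mwt: "maximal_weak_tree T G"
    and mon: "\<forall>f\<in>Arr G. reach T (gdom G f) (gcod G f) \<or> reach T (gcod G f) (gdom G f)"
    by (auto simp: monotone_graph_def)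
  from mwt have sub: "subgraph T G" and wt: "weak_tree T" by (auto simp: maximal_weak_tree_def)
  from wt have wfT: "wf_graph T" and connT: "connected_graph T" and thinT: "thin_free T"
    by (auto simp: weak_tree_def)
  have R: "reach T (gdom G f) (gcod G f)" if "f \<in> Arr G" for f using mon strict that by blast
  from eci obtain S0 where S0: "spanning_tree G S0" "finite (Arr G - S0)"
    by (auto simp: euler_char_is_int_def)
  define N where "N = card (Arr G - S0)"
  have euler: "euler_char G = 1 - int N" using euler_unique[OF wfG S0] N_def by simp
  have endsT: "gdom G f \<in> Obj T \<and> gcod G f \<in> Obj T" if "f \<in> Arr G" for f
  proof -
    from R[OF that] obtain q where "gpath T (gdom G f) q (gcod G f)" by (auto simp: reach_def)
    from gpath_ends[OF this wfT] show ?thesis .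
  qed
  have fwd: "gpath G b p c \<Longrightarrow> b \<in> Obj T \<Longrightarrow> c \<in> Obj T" for b p c
    by (induction rule: gpath.induct) (use endsT in auto)
  have bwd: "gpath G b p c \<Longrightarrow> c \<in> Obj T \<Longrightarrow> b \<in> Obj T" for b p c
    by (induction rule: gpath.induct) (use endsT in auto)
  have ObjTG: "Obj T \<subseteq> Obj G" using sub by (auto simp: subgraph_def)
  have ObjGT: "Obj G \<subseteq> Obj T"
  proof
    fix x assume x: "x \<in> Obj G"
    from connT obtain t0 where t0: "t0 \<in> Obj T" by (auto simp: connected_graph_def)
    hence "t0 \<in> Obj G" using ObjTG by auto
    with x connG have z: "(\<lambda>a b. reach G a b \<or> reach G b a)\<^sup>*\<^sup>* t0 x"
      by (auto simp: connected_graph_def)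
    from z t0 show "x \<in> Obj T"
    proof (induction rule: rtranclp_induct)
      case base then show ?case .
    next
      case (step b c)
      then show ?case unfolding reach_def using fwd bwd by blast
    qed
  qed
  have reachT_uconn: "gpath T a p b \<Longrightarrow> uconn G (Arr T) a b" for a p b
  proof (induction rule: gpath.induct)
    case (gpath_nil x) show ?case by (rule uconn_refl)
  next
    case (gpath_cons f x fs y)
    have "gdom G f = x" "gcod G f = gcod T f" using gpath_cons.hyps sub by (auto simp: subgraph_def)
    then have "uconn G (Arr T) x (gcod T f)" using uconn_edge1[OF gpath_cons.hyps(1), of G] by simp
    then show ?case using gpath_cons.IH by (rule uconn_trans)
  qed
  have connTu: "\<forall>x\<in>Obj G. \<forall>y\<in>Obj G. uconn G (Arr T) x y"
  proof (intro ballI)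
    fix x y assume "x \<in> Obj G" "y \<in> Obj G"
    then have "(\<lambda>a b. reach T a b \<or> reach T b a)\<^sup>*\<^sup>* x y"
      using connT ObjGT by (auto simp: connected_graph_def)
    then show "uconn G (Arr T) x y"
    proof (induction rule: rtranclp_induct)
      case base show ?case by (rule uconn_refl)
    next
      case (step b c)
      have "uconn G (Arr T) b c"
        using step(2) unfolding reach_def
      proof (elim disjE exE)
        fix p assume "gpath T b p c" then show ?thesis by (rule reachT_uconn)
      next
        fix p assume "gpath T c p b" then show ?thesis by (rule uconn_sym[OF reachT_uconn])
      qed
      with step(3) show ?case by (rule uconn_trans)
    qed
  qed
  define D where "D = Arr G - Arr T"
  have DG: "D \<subseteq> Arr G" by (auto simp: D_def)
  have Dsmall: "card D' \<le> N" if D': "D' \<subseteq> D" "finite D'" for D'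
  proof -
    have cn: "\<forall>x\<in>Obj G. \<forall>y\<in>Obj G. uconn G (Arr G - D') x y"
    proof (intro ballI)
      fix x y assume xy: "x \<in> Obj G" "y \<in> Obj G"
      show "uconn G (Arr G - D') x y"
        by (rule uconn_mono[OF connTu[rule_format, OF xy]]) (use D' sub in \<open>auto simp: D_def subgraph_def\<close>)
    qed
    have "D' \<subseteq> Arr G" using D' DG by auto
    from count_le[OF wfG D'(2) this cn S0] show ?thesis unfolding N_def .
  qed
  have finD: "finite D"
  proof (rule ccontr)
    assume "infinite D"
    then obtain D' where "finite D'" "card D' = Suc N" "D' \<subseteq> D"
      using infinite_arbitrarily_large by blast
    then show False using Dsmall[of D'] by simp
  qed
  have cardD: "card D \<le> N" using Dsmall[OF _ finD] by simp
  obtain h where h: "bij_betw h {0..<card D} D" using ex_bij_betw_nat_finite[OF finD] by blast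
  obtain x0 where x0: "x0 \<in> Obj G" using connG by (auto simp: connected_graph_def)
  define tp where "tp f = (SOME q. gpath T (gdom G f) q (gcod G f))" for f
  have tp: "gpath T (gdom G f) (tp f) (gcod G f)" if "f \<in> Arr G" for f
  proof -
    from R[OF that] have "\<exists>q. gpath T (gdom G f) q (gcod G f)" by (simp add: reach_def)
    then show ?thesis unfolding tp_def by (rule someI_ex)
  qed
  define s where "s i = (if i < card D then (gdom G (h i), [h i], gcod G (h i)) else (x0, [], x0))" for i
  define t where "t i = (if i < card D then (gdom G (h i), tp (h i), gcod G (h i)) else (x0, [], x0))" for i
  define g2 where "g2 = {0..<N}"
  have hD: "h i \<in> D" if "i < card D" for i using h that by (auto simp: bij_betw_def)
  have comp: "computad G g2 s t"
    unfolding computad_def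
  proof
    fix i assume "i \<in> g2"
    show "parallel G (s i) (t i)"
    proof (cases "i < card D")
      case True
      let ?f = "h i"
      have f: "?f \<in> Arr G" using hD[OF True] DG by auto
      have c: "gcod G ?f \<in> Obj G" using f wfG by (auto simp: wf_graph_def)
      have "gpath G (gdom G ?f) [?f] (gcod G ?f)" by (rule gpath.gpath_cons[OF f refl gpath.gpath_nil[OF c]])
      moreover have "gpath G (gdom G ?f) (tp ?f) (gcod G ?f)" by (rule gpath_sub[OF tp[OF f] sub])
      ultimately show ?thesis using True by (simp add: parallel_def is_mor_def s_def t_def)
    next
      case False
      then show ?thesis using x0 by (simp add: parallel_def is_mor_def s_def t_def gpath.gpath_nil)
    qed
  qed
  have cong_par: "gen_cong G g2 s t m n \<Longrightarrow> parallel G m n" for m n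
  proof (induction rule: gen_cong.induct)
    case (cong_gen \<alpha>) then show ?case using comp by (auto simp: computad_def)
  next
    case (cong_refl m) then show ?case by (auto simp: parallel_def)
  next
    case (cong_sym m n) then show ?case by (auto simp: parallel_def)
  next
    case (cong_trans m n k) then show ?case by (auto simp: parallel_def)
  next
    case (cong_ctx x p y q w a b z)
    then have pq: "gpath G x p y" "gpath G x q y" by (auto simp: parallel_def is_mor_def)
    have "gpath G w (a @ p @ b) z" by (rule gpath_append[OF cong_ctx.hyps(2) gpath_append[OF pq(1) cong_ctx.hyps(3)]])
    moreover have "gpath G w (a @ q @ b) z" by (rule gpath_append[OF cong_ctx.hyps(2) gpath_append[OF pq(2) cong_ctx.hyps(3)]])
    ultimately show ?case by (simp add: parallel_def is_mor_def)
  qed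
  have red: "gpath G x p y \<Longrightarrow> \<exists>r. gpath T x r y \<and> gen_cong G g2 s t (x, p, y) (x, r, y)" for x p y
  proof (induction rule: gpath.induct)
    case (gpath_nil x)
    have "gpath T x [] x" using gpath_nil ObjGT by (auto intro: gpath.gpath_nil)
    moreover have "gen_cong G g2 s t (x, [], x) (x, [], x)"
      by (rule gen_cong.cong_refl) (simp add: is_mor_def gpath.gpath_nil gpath_nil)
    ultimately show ?case by blast
  next
    case (gpath_cons f x fs y)
    from gpath_cons.IH obtain r' where r': "gpath T (gcod G f) r' y"
      "gen_cong G g2 s t (gcod G f, fs, y) (gcod G f, r', y)" by blast
    have fx: "gdom G f = x" "f \<in> Arr G" using gpath_cons.hyps by auto
    have yG: "y \<in> Obj G" using gpath_ends[OF gpath_cons.hyps(3) wfG] by simp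
    have cG: "gcod G f \<in> Obj G" "x \<in> Obj G" using wfG fx by (auto simp: wf_graph_def)
    have pf: "gpath G x [f] (gcod G f)" using gpath.gpath_cons[OF fx(2) fx(1) gpath.gpath_nil[OF cG(1)]] .
    have c1: "gen_cong G g2 s t (x, [f] @ fs @ [], y) (x, [f] @ r' @ [], y)"
      by (rule gen_cong.cong_ctx[OF r'(2) pf gpath.gpath_nil[OF yG]])
    hence c1': "gen_cong G g2 s t (x, f # fs, y) (x, f # r', y)" by simp
    show ?case
    proof (cases "f \<in> Arr T")
      case True
      have e: "gdom T f = x" "gcod T f = gcod G f" using sub True fx by (auto simp: subgraph_def)
      have "gpath T x (f # r') y"
        by (rule gpath.gpath_cons[OF True e(1)]) (use r'(1) e(2) in simp)
      then show ?thesis using c1' by blast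
    next
      case False
      then have fD: "f \<in> D" using fx by (simp add: D_def)
      have "f \<in> h ` {0..<card D}" using h fD by (simp add: bij_betw_def)
      then obtain i where i: "i < card D" "f = h i" by auto
      have ig: "i \<in> g2" using i cardD by (simp add: g2_def)
      have g: "gen_cong G g2 s t (x, [f], gcod G f) (x, tp f, gcod G f)"
        using gen_cong.cong_gen[OF ig, of G s t] i fx by (simp add: s_def t_def)
      have rG: "gpath G (gcod G f) r' y" by (rule gpath_sub[OF r'(1) sub])
      have c2: "gen_cong G g2 s t (x, [] @ [f] @ r', y) (x, [] @ tp f @ r', y)"
        by (rule gen_cong.cong_ctx[OF g gpath.gpath_nil[OF cG(2)] rG])
      hence c2': "gen_cong G g2 s t (x, f # r', y) (x, tp f @ r', y)" by simp
      have "gpath T x (tp f @ r') y" using gpath_append[OF tp[OF fx(2)] r'(1)] fx by simp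
      then show ?thesis using gen_cong.cong_trans[OF c1' c2'] by blast
    qed
  qed
  have pres: "presents_thin_reflection G g2 s t"
    unfolding presents_thin_reflection_def
  proof (intro allI iffI)
    fix m n assume "gen_cong G g2 s t m n" then show "parallel G m n" by (rule cong_par)
  next
    fix m n assume par: "parallel G m n"
    obtain x p y where m: "m = (x, p, y)" by (cases m) auto
    obtain x' q y' where n: "n = (x', q, y')" by (cases n) auto
    from par m n have pp: "gpath G x p y" "gpath G x q y" "x' = x" "y' = y"
      by (auto simp: parallel_def is_mor_def)
    obtain r1 where r1: "gpath T x r1 y" "gen_cong G g2 s t (x, p, y) (x, r1, y)" using red[OF pp(1)] by blast
    obtain r2 where r2: "gpath T x r2 y" "gen_cong G g2 s t (x, q, y) (x, r2, y)" using red[OF pp(2)] by blast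
    have "r1 = r2" using thinT r1(1) r2(1) by (auto simp: thin_free_def)
    then have "gen_cong G g2 s t (x, r1, y) (x, q, y)"
      using gen_cong.cong_sym[OF r2(2)] by simp
    then have "gen_cong G g2 s t (x, p, y) (x, q, y)"
      by (rule gen_cong.cong_trans[OF r1(2)])
    then show "gen_cong G g2 s t m n" using m n pp by simp
  qed
  have "finite g2" "int (card g2) = 1 - euler_char G" using euler by (auto simp: g2_def)
  then show ?thesis using comp pres by blast
qed

end
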